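(* For all histories $\vec\delta,\vec\gamma,\vec\delta',\vec\gamma'$ and all $\rho,\sigma$: if $\langle\vec\delta,\rho\rangle$ is compliant with $\langle\vec\gamma,\sigma\rangle$, then $\langle\vec\delta':\vec\delta,\rho\rangle$ is compliant with $\langle\vec\gamma':\vec\gamma,\sigma\rangle$, where $\vec\delta':\vec\delta$ denotes the stack obtained by placing $\vec\delta$ on top of $\vec\delta'$ (concatenation with $\vec\delta'$ at the bottom), and similarly for $\vec\gamma':\vec\gamma$.
   Context: Let $\mathcal N$ be a countable set of names and $\overline{\mathcal N}=\{\bar a\mid a\in\mathcal N\}$ a disjoint set of conames; $\alpha$ ranges over $\mathcal N\cup\overline{\mathcal N}$, with $\bar{\bar a}=a$. Retractable contracts are the closed expressions generated by $\sigma ::= \mathbf 1 \mid \sum_{i\in I} a_i.\sigma_i \ (\text{input}) \mid \sum_{i\in I}\bar a_i.\sigma_i\ (\text{retractable output}) \mid \bigoplus_{i\in I}\bar a_i.\sigma_i\ (\text{unretractable output}) \mid x \mid \mathsf{rec}\,x.\sigma$, where $I$ is non-empty and finite, names/conames in each choice are pairwise distinct, and $\sigma$ is not a variable in $\mathsf{rec}\,x.\sigma$. Choices are commutative; $\mathsf{rec}\,x.\sigma$ is identified with $\sigma[\mathsf{rec}\,x.\sigma/x]$. A unary $\bar a.\sigma$ may be read as either kind of output. Histories are stacks $\vec\gamma ::= [\,] \mid \vec\gamma:\sigma$ with $\sigma$ a retractable contract or the special symbol $\circ$ (the last element pushed is the top). A contract with history is a pair $\langle\vec\gamma,\sigma\rangle$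 with $\sigma$ a contract or $\circ$. Transitions: $\langle\vec\gamma,\alpha.\sigma+\sigma'\rangle\xrightarrow{\alpha}\langle\vec\gamma:\sigma',\sigma\rangle$ (for retractable choices, $+$ being input or retractable output sum); $\langle\vec\gamma,\bar a.\sigma\oplus\sigma'\rangle\xrightarrow{\tau}\langle\vec\gamma,\bar a.\sigma\rangle$; $\langle\vec\gamma,\alpha.\sigma\rangle\xrightarrow{\alpha}\langle\vec\gamma:\circ,\sigma\rangle$; $\langle\vec\gamma:\sigma',\sigma\rangle\xrightarrow{\mathsf{rb}}\langle\vec\gamma,\sigma'\rangle$. Client/server pairs $\langle\vec\delta,\rho\rangle\parallel\langle\vec\gamma,\sigma\rangle$ reduce by: (comm) if $\langle\vec\delta,\rho\rangle\xrightarrow{\alpha}\langle\vec\delta',\rho'\rangle$ and $\langle\vec\gamma,\sigma\rangle\xrightarrow{\bar\alpha}\langle\vec\gamma',\sigma'\rangle$ then the pair reduces to $\langle\vec\delta',\rho'\rangle\parallel\langle\vec\gamma',\sigma'\rangle$; ($\tau$) a $\tau$-transition of either component alone; (rbk) if both components do an $\mathsf{rb}$ transition and $\rho\neq\mathbf 1$, both roll back simultaneously; rule (rbk) applies only if neither (comm) nor ($\tau$) applies. Then $\langle\vec\delta,\rho\rangle$ is compliant with $\langle\vec\gamma,\sigma\rangle$ if whenever $\langle\vec\delta,\rho\rangle\parallel\langle\vec\gamma,\sigma\rangle$ reduces in finitely many steps to a pair $\langle\vec\delta'',\rho'\rangle\parallel\langle\vec\gamma'',\sigma'\rangle$ with no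 further reduction, we have $\rho'=\mathbf 1$. *)

theory Defs
  imports Main "HOL-Library.Countable"
begin

text \<open>Kinds of choices: input sum, retractable output sum, unretractable output sum.\<close>
datatype kind = KIn | KROut | KUOut

text \<open>Raw syntax of retractable contracts (variables are natural numbers).
  A choice is a list of (name, continuation) pairs; the order is irrelevant
  for the semantics below (commutativity of choices).\<close>
datatype 'n ctr =
    One
  | Ch kind "('n \<times> 'n ctr) list"
  | Var nat
  | Rec nat "'n ctr"

primrec fv :: "'n ctr \<Rightarrow> nat set" where
  "fv One = {}"
| "fv (Ch k bs) = \<Union> (snd ` set (map (map_prod id fv) bs))"
| "fv (Var x) = {x}"
| "fv (Rec x s) = fv s - {x}"

primrec is_var :: "'n ctr \<Rightarrow> bool" where
  "is_var One = False"
| "is_var (Ch k bs) = False"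
| "is_var (Var x) = True"
| "is_var (Rec x s) = False"

primrec wf_syn :: "'n ctr \<Rightarrow> bool" where
  "wf_syn One = True"
| "wf_syn (Ch k bs) = (bs \<noteq> [] \<and> distinct (map fst bs) \<and> (\<forall>p \<in> set (map (map_prod id wf_syn) bs). snd p))"
| "wf_syn (Var x) = True"
| "wf_syn (Rec x s) = (\<not> is_var s \<and> wf_syn s)"

definition contract :: "'n ctr \<Rightarrow> bool" where
  "contract t \<longleftrightarrow> wf_syn t \<and> fv t = {}"

primrec subst :: "nat \<Rightarrow> 'n ctr \<Rightarrow> 'n ctr \<Rightarrow> 'n ctr" where
  "subst x r One = One"
| "subst x r (Ch k bs) = Ch k (map (map_prod id (subst x r)) bs)"
| "subst x r (Var y) = (if x = y then r else Var y)"
| "subst x r (Rec y s) = (if x = y then Rec y s else Rec y (subst x r s))"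

text \<open>Being equal to \<open>1\<close> up to the identification rec x.s = s[rec x.s/x].\<close>
inductive is_one :: "'n ctr \<Rightarrow> bool" where
  "is_one One"
| "is_one (subst x (Rec x s) s) \<Longrightarrow> is_one (Rec x s)"

datatype 'n cst = Circ | C "'n ctr"

type_synonym 'n history = "'n cst list"  \<comment> \<open>last element = top of the stack\<close>
type_synonym 'n hconf = "'n history \<times> 'n cst"

datatype 'n act = In 'n | Out 'n

primrec dual :: "'n act \<Rightarrow> 'n act" where
  "dual (In a) = Out a"
| "dual (Out a) = In a"

datatype 'n lab = Act "'n act" | Tau | Rb

primrec kact :: "kind \<Rightarrow> 'n \<Rightarrow> 'n act" where
  "kact KIn a = In a"
| "kact KROut a = Out a"
| "kact KUOut a = Out a"

inductive hstep :: "'n hconf \<Rightarrow> 'n lab \<Rightarrow> 'n hconf \<Rightarrow> bool" where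
  retract: "\<lbrakk> k \<noteq> KUOut; (a, s) \<in> set bs; length bs \<ge> 2 \<rbrakk> \<Longrightarrow>
     hstep (h, C (Ch k bs)) (Act (kact k a)) (h @ [C (Ch k (remove1 (a, s) bs))], C s)"
| intchoice: "\<lbrakk> (a, s) \<in> set bs; length bs \<ge> 2 \<rbrakk> \<Longrightarrow>
     hstep (h, C (Ch KUOut bs)) Tau (h, C (Ch KUOut [(a, s)]))"
| prefix: "hstep (h, C (Ch k [(a, s)])) (Act (kact k a)) (h @ [Circ], C s)"
| unfold: "hstep (h, C (subst x (Rec x s) s)) l c \<Longrightarrow> hstep (h, C (Rec x s)) l c"
| rollback: "hstep (h @ [g], c) Rb (h, g)"

definition is_one_cst :: "'n cst \<Rightarrow> bool" where
  "is_one_cst c \<longleftrightarrow> (\<exists>t. c = C t \<and> is_one t)"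

definition comm_or_tau :: "'n hconf \<Rightarrow> 'n hconf \<Rightarrow> bool" where
  "comm_or_tau p q \<longleftrightarrow>
     (\<exists>\<alpha> p' q'. hstep p (Act \<alpha>) p' \<and> hstep q (Act (dual \<alpha>)) q')
   \<or> (\<exists>p'. hstep p Tau p') \<or> (\<exists>q'. hstep q Tau q')"

inductive red :: "'n hconf \<times> 'n hconf \<Rightarrow> 'n hconf \<times> 'n hconf \<Rightarrow> bool" where
  comm: "\<lbrakk> hstep p (Act \<alpha>) p'; hstep q (Act (dual \<alpha>)) q' \<rbrakk> \<Longrightarrow> red (p, q) (p', q')"
| tau_l: "hstep p Tau p' \<Longrightarrow> red (p, q) (p', q)"
| tau_r: "hstep q Tau q' \<Longrightarrow> red (p, q) (p, q')"
| rbk: "\<lbrakk> hstep p Rb p'; hstep q Rb q'; \<not> is_one_cst (snd p); \<not> comm_or_tau p q \<rbrakk>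
        \<Longrightarrow> red (p, q) (p', q')"

definition compliant :: "'n hconf \<Rightarrow> 'n hconf \<Rightarrow> bool" where
  "compliant p q \<longleftrightarrow>
     (\<forall>p' q'. red\<^sup>*\<^sup>* (p, q) (p', q') \<and> (\<nexists>r. red (p', q') r) \<longrightarrow> is_one_cst (snd p'))"

definition wf_cst :: "'n cst \<Rightarrow> bool" where
  "wf_cst c \<longleftrightarrow> (c = Circ \<or> (\<exists>t. c = C t \<and> contract t))"

definition wf_hist :: "'n history \<Rightarrow> bool" where
  "wf_hist h \<longleftrightarrow> (\<forall>c \<in> set h. wf_cst c)"

end

theory Submission
  imports Defs
begin

lemma hstep_nonrb:
  "hstep p l q \<Longrightarrow> l \<noteq> Rb \<Longrightarrow>
    \<exists>xs. fst q = fst p @ xs \<and> (\<forall>h0. hstep (h0, snd p) l (h0 @ xs, snd q))"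
proof (induction rule: hstep.induct)
  case (retract k a s bs h)
  then show ?case by (auto intro: hstep.retract)
next
  case (intchoice a s bs h)
  then show ?case by (auto intro: hstep.intchoice)
next
  case (prefix h k a s)
  then show ?case by (auto intro: hstep.prefix)
next
  case (unfold h x s l c)
  then show ?case by (auto intro: hstep.unfold)
next
  case (rollback h g c)
  then show ?case by simp
qed

lemma hstep_rb: "hstep p l q \<Longrightarrow> l = Rb \<Longrightarrow> fst p = fst q @ [snd q]"
  by (induction rule: hstep.induct) auto

lemma lift_step:
  assumes "hstep (h, c) l (h', c')"
  shows "hstep (d @ h, c) l (d @ h', c')"
proof (cases "l = Rb")
  case True
  with hstep_rb[OF assms] have "h = h' @ [c']" by simp
  then show ?thesis using True hstep.rollback[of "d @ h'" c' c] by simp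
next
  case False
  from hstep_nonrb[OF assms False] obtain xs where "h' = h @ xs"
    "\<forall>h0. hstep (h0, c) l (h0 @ xs, c')" by auto
  then show ?thesis by (metis append.assoc)
qed

lemma lower_step:
  assumes "hstep (d @ h, c) l q" "l \<noteq> Rb"
  shows "\<exists>h'. q = (d @ h', snd q) \<and> hstep (h, c) l (h', snd q)"
proof -
  from hstep_nonrb[OF assms] obtain xs where "fst q = d @ h @ xs"
    "\<forall>h0. hstep (h0, c) l (h0 @ xs, snd q)" by auto
  then show ?thesis by (intro exI[of _ "h @ xs"]) (auto simp: prod_eq_iff)
qed

lemma cot_down:
  "comm_or_tau (d @ h1, c1) (e @ h2, c2) \<Longrightarrow> comm_or_tau (h1, c1) (h2, c2)"
  unfolding comm_or_tau_def
  apply (elim disjE exE conjE)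
    apply (drule lower_step, simp)+
    apply blast
   apply (drule lower_step, simp, blast)
  apply (drule lower_step, simp, blast)
  done

lemma cot_up:
  "comm_or_tau (h1, c1) (h2, c2) \<Longrightarrow> comm_or_tau (d @ h1, c1) (e @ h2, c2)"
  unfolding comm_or_tau_def
  apply (elim disjE exE conjE)
    apply (metis lift_step prod.collapse)
   apply (metis lift_step prod.collapse)
  apply (metis lift_step prod.collapse)
  done

lemma cot_eq:
  "comm_or_tau (d @ h1, c1) (e @ h2, c2) = comm_or_tau (h1, c1) (h2, c2)"
  using cot_down cot_up by blast

lemma lift_red:
  assumes "red ((h1, c1), (h2, c2)) ((h1', c1'), (h2', c2'))"
  shows "red ((d @ h1, c1), (e @ h2, c2)) ((d @ h1', c1'), (e @ h2', c2'))"
  using assms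
proof (cases rule: red.cases)
  case (comm \<alpha>)
  then show ?thesis by (auto intro: red.comm lift_step)
next
  case tau_l
  then show ?thesis by (auto intro: red.tau_l lift_step)
next
  case tau_r
  then show ?thesis by (auto intro: red.tau_r lift_step)
next
  case rbk
  then show ?thesis using cot_eq[of d h1 c1 e h2 c2]
    by (auto intro!: red.rbk lift_step)
qed

lemma stuck:
  assumes ncot: "\<not> comm_or_tau (h1, c1) (h2, c2)" and a: "h1 = [] \<or> h2 = []"
  shows "\<nexists>r. red ((h1, c1), (h2, c2)) r"
proof
  assume "\<exists>r. red ((h1, c1), (h2, c2)) r"
  then obtain r where "red ((h1, c1), (h2, c2)) r" by blast
  then show False
  proof (cases rule: red.cases)
    case (comm \<alpha> p1 q1)
    then have "comm_or_tau (h1, c1) (h2, c2)" unfolding comm_or_tau_def by blast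
    then show ?thesis using ncot by contradiction
  next
    case (tau_l p1)
    then have "comm_or_tau (h1, c1) (h2, c2)" unfolding comm_or_tau_def by blast
    then show ?thesis using ncot by contradiction
  next
    case (tau_r q1)
    then have "comm_or_tau (h1, c1) (h2, c2)" unfolding comm_or_tau_def by blast
    then show ?thesis using ncot by contradiction
  next
    case (rbk p1 q1)
    have "h1 \<noteq> []" using hstep_rb[OF rbk(2)] by simp
    moreover have "h2 \<noteq> []" using hstep_rb[OF rbk(3)] by simp
    ultimately show ?thesis using a by simp
  qed
qed
theorem lemma3:
  fixes \<delta> \<gamma> \<delta>' \<gamma>' :: "'n::countable history" and \<rho> \<sigma> :: "'n cst"
  assumes "wf_hist \<delta>" and "wf_hist \<gamma>" and "wf_hist \<delta>'" and "wf_hist \<gamma>'"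
    and "wf_cst \<rho>" and "wf_cst \<sigma>"
    and "compliant (\<delta>, \<rho>) (\<gamma>, \<sigma>)"
  shows "compliant (\<delta>' @ \<delta>, \<rho>) (\<gamma>' @ \<gamma>, \<sigma>)"
proof -
  have C: "\<And>p' q'. red\<^sup>*\<^sup>* ((\<delta>, \<rho>), (\<gamma>, \<sigma>)) (p', q') \<Longrightarrow> \<nexists>r. red (p', q') r \<Longrightarrow> is_one_cst (snd p')"
    using assms(7) unfolding compliant_def by blast
  have inv: "\<exists>h1 c1 h2 c2. r = ((\<delta>' @ h1, c1), (\<gamma>' @ h2, c2)) \<and>
       red\<^sup>*\<^sup>* ((\<delta>, \<rho>), (\<gamma>, \<sigma>)) ((h1, c1), (h2, c2))"
    if "red\<^sup>*\<^sup>* ((\<delta>' @ \<delta>, \<rho>), (\<gamma>' @ \<gamma>, \<sigma>)) r" for r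
    using that
  proof (induction rule: rtranclp_induct)
    case base
    then show ?case by blast
  next
    case (step y z)
    then obtain h1 c1 h2 c2 where y: "y = ((\<delta>' @ h1, c1), (\<gamma>' @ h2, c2))"
      and R: "red\<^sup>*\<^sup>* ((\<delta>, \<rho>), (\<gamma>, \<sigma>)) ((h1, c1), (h2, c2))" by blast
    from step.hyps(2)[unfolded y] show ?case
    proof (cases rule: red.cases)
      case (comm \<alpha> p' q')
      from lower_step[OF comm(2)] lower_step[OF comm(3)] obtain a b where
        "p' = (\<delta>' @ a, snd p')" "hstep (h1, c1) (Act \<alpha>) (a, snd p')"
        "q' = (\<gamma>' @ b, snd q')" "hstep (h2, c2) (Act (dual \<alpha>)) (b, snd q')" by auto
      then have "red ((h1, c1), (h2, c2)) ((a, snd p'), (b, snd q'))" by (blast intro: red.comm)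
      with R have "red\<^sup>*\<^sup>* ((\<delta>, \<rho>), (\<gamma>, \<sigma>)) ((a, snd p'), (b, snd q'))" by (rule rtranclp.rtrancl_into_rtrancl)
      then show ?thesis using comm(1) \<open>p' = _\<close> \<open>q' = _\<close> by (intro exI[of _ a] exI[of _ "snd p'"] exI[of _ b] exI[of _ "snd q'"]) simp
    next
      case (tau_l p')
      from lower_step[OF tau_l(2)] obtain a where
        "p' = (\<delta>' @ a, snd p')" "hstep (h1, c1) Tau (a, snd p')" by auto
      from red.tau_l[OF this(2), of "(h2, c2)"]
      have "red\<^sup>*\<^sup>* ((\<delta>, \<rho>), (\<gamma>, \<sigma>)) ((a, snd p'), (h2, c2))" by (rule rtranclp.rtrancl_into_rtrancl[OF R])
      then show ?thesis using tau_l(1) \<open>p' = _\<close> by (intro exI[of _ a] exI[of _ "snd p'"] exI[of _ h2] exI[of _ c2]) simp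
    next
      case (tau_r q')
      from lower_step[OF tau_r(2)] obtain b where
        "q' = (\<gamma>' @ b, snd q')" "hstep (h2, c2) Tau (b, snd q')" by auto
      from red.tau_r[OF this(2), of "(h1, c1)"]
      have "red\<^sup>*\<^sup>* ((\<delta>, \<rho>), (\<gamma>, \<sigma>)) ((h1, c1), (b, snd q'))" by (rule rtranclp.rtrancl_into_rtrancl[OF R])
      then show ?thesis using tau_r(1) \<open>q' = _\<close> by (intro exI[of _ h1] exI[of _ c1] exI[of _ b] exI[of _ "snd q'"]) simp
    next
      case (rbk p' q')
      have e1: "\<delta>' @ h1 = fst p' @ [snd p']" using hstep_rb[OF rbk(2)] by simp
      have e2: "\<gamma>' @ h2 = fst q' @ [snd q']" using hstep_rb[OF rbk(3)] by simp
      have ncot: "\<not> comm_or_tau (h1, c1) (h2, c2)" using rbk(5) cot_up by blast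
      have nonone: "\<not> is_one_cst c1" using rbk(4) by simp
      have ne: "h1 \<noteq> [] \<and> h2 \<noteq> []"
      proof (rule ccontr)
        assume "\<not> (h1 \<noteq> [] \<and> h2 \<noteq> [])"
        then have "h1 = [] \<or> h2 = []" by simp
        from stuck[OF ncot this] have "is_one_cst (snd (h1, c1))" by (rule C[OF R])
        then show False using nonone by simp
      qed
      define a where "a = butlast h1"
      define g1 where "g1 = last h1"
      define b where "b = butlast h2"
      define g2 where "g2 = last h2"
      have h1: "h1 = a @ [g1]" using ne unfolding a_def g1_def by simp
      have h2: "h2 = b @ [g2]" using ne unfolding b_def g2_def by simp
      have "p' = (\<delta>' @ a, g1)" using e1 h1 by (cases p') auto
      moreover have "q' = (\<gamma>' @ b, g2)" using e2 h2 by (cases q') auto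
      moreover have "red ((h1, c1), (h2, c2)) ((a, g1), (b, g2))"
        unfolding h1 h2
        by (rule red.rbk) (rule hstep.rollback, rule hstep.rollback, simp add: nonone, rule ncot[unfolded h1 h2])
      moreover from R this have "red\<^sup>*\<^sup>* ((\<delta>, \<rho>), (\<gamma>, \<sigma>)) ((a, g1), (b, g2))" by (rule rtranclp.rtrancl_into_rtrancl)
      ultimately show ?thesis using rbk(1) by (intro exI[of _ a] exI[of _ g1] exI[of _ b] exI[of _ g2]) simp
    qed
  qed
  show ?thesis unfolding compliant_def
  proof (intro allI impI)
    fix p' q'
    assume a: "red\<^sup>*\<^sup>* ((\<delta>' @ \<delta>, \<rho>), \<gamma>' @ \<gamma>, \<sigma>) (p', q') \<and> (\<nexists>r. red (p', q') r)"
    then obtain h1 c1 h2 c2 where pq: "(p', q') = ((\<delta>' @ h1, c1), (\<gamma>' @ h2, c2))"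
      and R: "red\<^sup>*\<^sup>* ((\<delta>, \<rho>), (\<gamma>, \<sigma>)) ((h1, c1), (h2, c2))" using inv by blast
    have "\<nexists>r. red ((h1, c1), (h2, c2)) r"
    proof
      assume "\<exists>r. red ((h1, c1), (h2, c2)) r"
      then obtain h1' c1' h2' c2' where "red ((h1, c1), (h2, c2)) ((h1', c1'), (h2', c2'))"
        by (metis prod.collapse)
      from lift_red[OF this, of \<delta>' \<gamma>'] a pq show False by auto
    qed
    from C[OF R this] pq show "is_one_cst (snd p')" by auto
  qed
qed

end
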